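(* Assume that for each $i\in I_n$, every equilibrium $u\in\mathbb{R}^n_+$ of the system lying in $\pi_i$ satisfies $\alpha_iu<1$. Then the system has a unique equilibrium $x^*\in\operatorname{int}\mathbb{R}^n_+$, and $x^*\le Y$.
   Context: Fix $n\ge 1$ and $I_n=\{1,\dots,n\}$. Consider the Lotka–Volterra system $x_i'=b_ix_i(1-\alpha_ix)$, $i\in I_n$, where $b_i>0$, $\alpha_i=(a_{i1},\dots,a_{in})$ with $a_{ii}>0$ and $a_{ij}\ge 0$, on $\mathbb{R}^n_+$; $\le$ is componentwise. $Y=(a_{11}^{-1},\dots,a_{nn}^{-1})^T$, $\pi_i=\{x\in\mathbb{R}^n_+:x_i=0\}$. *)

theory Defs
  imports "HOL-Analysis.Analysis"
begin

text \<open>Lotka-Volterra system x_i' = b_i x_i (1 - alpha_i x) on R^n_+, with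
  alpha_i the i-th row of the interaction matrix A (so alpha_i x = (A$i) \<bullet> x).\<close>

definition nonneg_orthant :: "(real ^ 'n) set" where
  "nonneg_orthant = {x. \<forall>i. 0 \<le> x $ i}"

definition LV_field :: "real ^ 'n \<Rightarrow> real ^ 'n ^ 'n \<Rightarrow> real ^ 'n \<Rightarrow> real ^ 'n" where
  "LV_field b A x = (\<chi> i. b $ i * x $ i * (1 - (A $ i) \<bullet> x))"

definition LV_equilibrium :: "real ^ 'n \<Rightarrow> real ^ 'n ^ 'n \<Rightarrow> real ^ 'n \<Rightarrow> bool" where
  "LV_equilibrium b A u \<longleftrightarrow> u \<in> nonneg_orthant \<and> LV_field b A u = 0"

definition coord_face :: "'n \<Rightarrow> (real ^ 'n) set" where
  "coord_face i = {x \<in> nonneg_orthant. x $ i = 0}"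

end

theory Submission
  imports Defs
begin

lemma interior_orthant_iff:
  "(x::real^'n) \<in> interior nonneg_orthant \<longleftrightarrow> (\<forall>i. 0 < x $ i)"
proof
  assume x: "x \<in> interior nonneg_orthant"
  show "\<forall>i. 0 < x $ i"
  proof
    fix i
    have "nonneg_orthant \<subseteq> {y::real^'n. y $ i \<ge> 0}" by (auto simp: nonneg_orthant_def)
    then have "interior nonneg_orthant \<subseteq> interior {y::real^'n. y $ i \<ge> 0}"
      by (rule interior_mono)
    with x show "0 < x $ i" using interior_halfspace_component_ge by auto
  qed
next
  assume "\<forall>i. 0 < x $ i"
  moreover have op: "open {y::real^'n. \<forall>i. 0 < y $ i}"
    by (simp add: Collect_all_eq open_INT open_halfspace_component_gt_cart)
  moreover have sub: "{y::real^'n. \<forall>i. 0 < y $ i} \<subseteq> nonneg_orthant"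
    by (auto simp: nonneg_orthant_def less_imp_le)
  have "{y::real^'n. \<forall>i. 0 < y $ i} \<subseteq> interior nonneg_orthant"
    by (rule interior_maximal[OF sub op])
  then show "x \<in> interior nonneg_orthant" using \<open>\<forall>i. 0 < x $ i\<close> by blast
qed

lemma row_ge_diag:
  assumes "\<forall>j. 0 \<le> A $ i $ j" "\<forall>j. 0 \<le> (x::real^'n) $ j"
  shows "A $ i $ i * x $ i \<le> (A $ i) \<bullet> x"
  unfolding inner_vec_def inner_real_def
  by (rule member_le_sum[where f="\<lambda>j. A $ i $ j * x $ j"]) (auto simp: assms)


lemma no_two:
  fixes b :: "real ^ 'n" and A :: "real ^ 'n ^ 'n"
  assumes hyp: "\<forall>i u. LV_equilibrium b A u \<and> u \<in> coord_face i \<longrightarrow> (A $ i) \<bullet> u < 1"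
    and x: "\<forall>i. 0 < x $ i" "\<forall>i. A $ i \<bullet> x = 1"
    and y: "\<forall>i. 0 < y $ i" "\<forall>i. A $ i \<bullet> y = 1"
    and j: "x $ j > y $ j"
  shows False
proof -
  define J where "J = {j. x $ j > y $ j}"
  define g where "g = (\<lambda>j. x $ j / (x $ j - y $ j))"
  define t where "t = Min (g ` J)"
  have fJ: "finite J" by simp
  have jJ: "j \<in> J" using j by (simp add: J_def)
  have tin: "t \<in> g ` J" unfolding t_def using fJ jJ by (intro Min_in) auto
  then obtain k where kJ: "k \<in> J" and tk: "t = g k" by auto
  have tle: "t \<le> g l" if "l \<in> J" for l unfolding t_def using fJ that by simp
  have tpos: "t > 0" using tk kJ x(1) by (simp add: g_def J_def)
  define z where "z = (1 - t) *\<^sub>R x + t *\<^sub>R y"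
  have zc: "z $ l = x $ l - t * (x $ l - y $ l)" for l by (simp add: z_def algebra_simps)
  have Az: "A $ i \<bullet> z = 1" for i
    using x(2) y(2) by (simp add: z_def inner_add_right algebra_simps)
  have znn: "0 \<le> z $ l" for l
  proof (cases "l \<in> J")
    case True
    then have d: "x $ l - y $ l > 0" by (simp add: J_def)
    have "t \<le> x $ l / (x $ l - y $ l)" using tle[OF True] by (simp add: g_def)
    then have "t * (x $ l - y $ l) \<le> x $ l" using d by (simp add: le_divide_eq)
    then show ?thesis by (simp add: zc)
  next
    case False
    then have "x $ l - y $ l \<le> 0" by (simp add: J_def)
    then have "t * (x $ l - y $ l) \<le> 0" using tpos by (simp add: mult_nonneg_nonpos)
    then show ?thesis using x(1) zc[of l] by (smt (verit))
  qed
  have zk: "z $ k = 0"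
  proof -
    have d: "x $ k - y $ k > 0" using kJ by (simp add: J_def)
    then show ?thesis using tk by (simp add: zc g_def)
  qed
  have eq: "LV_equilibrium b A z"
    unfolding LV_equilibrium_def LV_field_def nonneg_orthant_def
    using znn Az by (simp add: vec_eq_iff)
  have "z \<in> coord_face k" using znn zk by (simp add: coord_face_def nonneg_orthant_def)
  with hyp eq have "A $ k \<bullet> z < 1" by blast
  with Az show False by simp
qed

lemma interior_eq_row:
  fixes b :: "real ^ 'n" and A :: "real ^ 'n ^ 'n"
  assumes b_pos: "\<forall>i. 0 < b $ i"
    and "x \<in> interior nonneg_orthant" "LV_equilibrium b A x"
  shows "\<forall>i. 0 < x $ i" "\<forall>i. A $ i \<bullet> x = 1"
proof -
  show p: "\<forall>i. 0 < x $ i" using assms(2) interior_orthant_iff by blast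
  show "\<forall>i. A $ i \<bullet> x = 1"
  proof
    fix i
    have "b $ i * x $ i * (1 - A $ i \<bullet> x) = 0"
      using assms(3) unfolding LV_equilibrium_def LV_field_def by (simp add: vec_eq_iff)
    then show "A $ i \<bullet> x = 1" using p b_pos by (metis less_irrefl mult_eq_0_iff right_minus_eq)
  qed
qed

theorem lemma5p1:
  fixes b :: "real ^ 'n" and A :: "real ^ 'n ^ 'n"
  assumes b_pos: "\<forall>i. 0 < b $ i"
    and diag_pos: "\<forall>i. 0 < A $ i $ i"
    and offdiag_nonneg: "\<forall>i j. 0 \<le> A $ i $ j"
    and hyp: "\<forall>i u. LV_equilibrium b A u \<and> u \<in> coord_face i \<longrightarrow> (A $ i) \<bullet> u < 1"
  shows "(\<exists>!x. x \<in> interior nonneg_orthant \<and> LV_equilibrium b A x) \<and>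
         (\<forall>x. x \<in> interior nonneg_orthant \<and> LV_equilibrium b A x
              \<longrightarrow> x \<le> (\<chi> i. 1 / A $ i $ i))"
proof -
  define Y :: "real ^ 'n" where "Y = (\<chi> i. 1 / A $ i $ i)"
  have Ypos: "Y $ i > 0" for i using diag_pos by (simp add: Y_def)
  have AY: "A $ i $ i * Y $ i = 1" for i using diag_pos[rule_format, of i] by (simp add: Y_def)
  define f :: "real ^ 'n \<Rightarrow> real ^ 'n"
    where "f = (\<lambda>x. \<chi> i. max 0 (min (Y $ i) (x $ i + 1 - A $ i \<bullet> x)))"
  define S where "S = cbox (0::real ^ 'n) Y"
  have cont: "continuous_on S f"
    unfolding f_def by (intro continuous_intros)
  have fim: "f \<in> S \<rightarrow> S"
    using Ypos by (auto simp: S_def f_def mem_box_cart less_imp_le)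
  have "(0::real^'n) \<in> S" using Ypos by (simp add: S_def mem_box_cart less_imp_le)
  then have Sne: "S \<noteq> {}" by blast
  obtain x where xS: "x \<in> S" and fx: "f x = x"
    using brouwer[OF compact_cbox[of 0 Y, folded S_def] convex_box(1)[of 0 Y, folded S_def] Sne cont fim]
    by blast
  have xnn: "\<forall>j. 0 \<le> x $ j" using xS by (simp add: S_def mem_box_cart)
  have fix_i: "x $ i = max 0 (min (Y $ i) (x $ i + 1 - A $ i \<bullet> x))" for i
    using fx by (simp add: f_def vec_eq_iff)
  have ge: "A $ i $ i * x $ i \<le> A $ i \<bullet> x" for i
    by (rule row_ge_diag) (use offdiag_nonneg xnn in auto)
  have cases_i: "(x $ i = 0 \<and> A $ i \<bullet> x \<ge> 1) \<or> (x $ i > 0 \<and> A $ i \<bullet> x = 1)" for i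
  proof -
    have a: "A $ i $ i * Y $ i = 1" by (rule AY)
    have d: "A $ i $ i > 0" using diag_pos by simp
    define s where "s = x $ i + 1 - A $ i \<bullet> x"
    have fi: "x $ i = max 0 (min (Y $ i) s)" using fix_i[of i] by (simp add: s_def)
    have g: "A $ i $ i * x $ i \<le> A $ i \<bullet> x" by (rule ge)
    have xi: "0 \<le> x $ i" using xnn by simp
    show ?thesis
    proof (cases "x $ i = 0")
      case True
      then have "min (Y $ i) s \<le> 0" using fi by linarith
      then have "s \<le> 0" using Ypos[of i] by linarith
      then show ?thesis using True by (simp add: s_def)
    next
      case False
      then have xp: "x $ i > 0" using xi by linarith
      then have m: "x $ i = min (Y $ i) s" using fi by linarith
      show ?thesis
      proof (cases "s \<le> Y $ i")
        case True
        then have "x $ i = s" using m by linarith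
        then show ?thesis using xp by (simp add: s_def)
      next
        case False
        then have xY: "x $ i = Y $ i" using m by linarith
        then have "A $ i \<bullet> x \<ge> 1" using g a by simp
        moreover have "s > x $ i" using False xY by linarith
        ultimately show ?thesis by (simp add: s_def)
      qed
    qed
  qed
  have eqx: "LV_equilibrium b A x"
    unfolding LV_equilibrium_def LV_field_def nonneg_orthant_def
    using xnn cases_i by (auto simp: vec_eq_iff)
  have xpos: "\<forall>i. 0 < x $ i"
  proof
    fix i
    show "0 < x $ i"
    proof (rule ccontr)
      assume "\<not> 0 < x $ i"
      then have "x $ i = 0" using xnn[rule_format, of i] by linarith
      then have "x \<in> coord_face i" using xnn by (simp add: coord_face_def nonneg_orthant_def)
      with hyp eqx have "A $ i \<bullet> x < 1" by blast
      with cases_i[of i] \<open>x $ i = 0\<close> show False by simp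
    qed
  qed
  have xint: "x \<in> interior nonneg_orthant" using xpos interior_orthant_iff by blast
  have uniq: "y = x" if "y \<in> interior nonneg_orthant \<and> LV_equilibrium b A y" for y
  proof (rule ccontr)
    assume "y \<noteq> x"
    then obtain j where "y $ j \<noteq> x $ j" by (auto simp: vec_eq_iff)
    note X = interior_eq_row[OF b_pos xint eqx]
    note Yy = interior_eq_row[OF b_pos conjunct1[OF that] conjunct2[OF that]]
    show False
    proof (cases "x $ j > y $ j")
      case True
      show False by (rule no_two[OF hyp X Yy True])
    next
      case False
      then have "y $ j > x $ j" using \<open>y $ j \<noteq> x $ j\<close> by simp
      show False by (rule no_two[OF hyp Yy X \<open>y $ j > x $ j\<close>])
    qed
  qed
  have bound: "x \<le> Y" if "x \<in> interior nonneg_orthant \<and> LV_equilibrium b A x" for x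
  proof -
    note X = interior_eq_row[OF b_pos conjunct1[OF that] conjunct2[OF that]]
    show ?thesis unfolding less_eq_vec_def
    proof
      fix i
      have "A $ i $ i * x $ i \<le> A $ i \<bullet> x"
        by (rule row_ge_diag) (use offdiag_nonneg X(1) in \<open>auto intro: less_imp_le\<close>)
      then have "A $ i $ i * x $ i \<le> A $ i $ i * Y $ i" using X(2) AY by simp
      then show "x $ i \<le> Y $ i" using diag_pos by simp
    qed
  qed
  have ex: "\<exists>!x. x \<in> interior nonneg_orthant \<and> LV_equilibrium b A x"
  proof (rule ex1I[of _ x])
    show "x \<in> interior nonneg_orthant \<and> LV_equilibrium b A x" using xint eqx by (rule conjI)
  next
    fix y assume "y \<in> interior nonneg_orthant \<and> LV_equilibrium b A y"
    then show "y = x" by (rule uniq)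
  qed
  have all: "\<forall>x. x \<in> interior nonneg_orthant \<and> LV_equilibrium b A x \<longrightarrow> x \<le> Y"
    by (intro allI impI) (rule bound)
  show ?thesis unfolding Y_def[symmetric] using ex all by (rule conjI)
qed

end
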